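(* Let $t,\ell,m$ be integers with $1 \le t \le \ell \le m$, and let $s$ be an integer with $(\ell-t)m \le s \le \ell m$ and $s\ge 1$. Then the $s$-th generalized Hamming weight of $\widehat{C}_{\det}(t;\ell,m)$ is $$\hat{d}_s=\hat{n}-\sum_{i=0}^{\ell m-s-1}q^i,$$ where $\hat n=|\widehat{\mathcal D}_t(\ell,m)|$ is the length of the code (the sum is empty, i.e. $0$, when $s=\ell m$).
   Context: $q$ is a prime power. Let $\widehat{\mathcal D}_t(\ell,m)\subset\mathbb{P}^{\ell m-1}(\mathbb{F}_q)=\mathbb{P}(\mathrm{Mat}_{\ell\times m}(\mathbb{F}_q))$ be the set of points $[M]$ with $M\ne 0$ and $\mathrm{rk}(M)\le t$; let $\hat n=|\widehat{\mathcal D}_t(\ell,m)|$, enumerate its points and choose representatives $M_1,\dots,M_{\hat n}$. The determinantal code $\widehat{C}_{\det}(t;\ell,m)\subseteq\mathbb{F}_q^{\hat n}$ is the set of vectors $(f(M_1),\dots,f(M_{\hat n}))$ for $f$ ranging over linear forms in the entries of an $\ell\times m$ matrix of indeterminates; it has dimension $\ell m$. For a linear code $C\subseteq\mathbb{F}_q^n$ and a subspace $D\subseteq C$, the support weight $\|D\|$ is the number of coordinates $i$ such that some $c\in D$ has $c_i\ne0$; the $s$-th generalized Hamming weight is $d_s(C)=\min\{\|D\|: D\subseteq C \text{ a subspace}, \dim D=s\}$. *)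

theory Defs
  imports "HOL-Analysis.Analysis" "HOL-Library.Function_Algebras"
begin

text \<open>Matrices of size l x m over a finite field 'a are elements of 'a^'m^'l,
  with l = CARD('l) rows and m = CARD('m) columns.\<close>

definition smat :: "'a::field \<Rightarrow> 'a^'m^'l \<Rightarrow> 'a^'m^'l" where
  "smat c M = (\<chi> i j. c * M$i$j)"

definition proj_pt :: "'a::field^'m^'l \<Rightarrow> ('a^'m^'l) set" where
  "proj_pt M = {smat c M | c. c \<noteq> 0}"

definition Dhat :: "nat \<Rightarrow> ('a::field^'m^'l) set set" where
  "Dhat t = {proj_pt M | M. M \<noteq> 0 \<and> rank M \<le> t}"

definition rep_system :: "nat \<Rightarrow> ('a::field^'m^'l) set \<Rightarrow> bool" where
  "rep_system t R \<longleftrightarrow> bij_betw proj_pt R (Dhat t)"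

definition lin_form :: "'a::field^'m^'l \<Rightarrow> 'a^'m^'l \<Rightarrow> 'a" where
  "lin_form C M = (\<Sum>i\<in>UNIV. \<Sum>j\<in>UNIV. C$i$j * M$i$j)"

text \<open>Codewords are functions from the coordinate set R to the field
  (extended by 0 outside R). Scalar multiplication is pointwise.\<close>
definition fscale :: "'a::field \<Rightarrow> ('b \<Rightarrow> 'a) \<Rightarrow> ('b \<Rightarrow> 'a)" where
  "fscale c f = (\<lambda>x. c * f x)"

definition det_code :: "('a::field^'m^'l) set \<Rightarrow> ('a^'m^'l \<Rightarrow> 'a) set" where
  "det_code R = {(\<lambda>M. if M \<in> R then lin_form C M else 0) | C. True}"

definition support_weight :: "'b set \<Rightarrow> ('b \<Rightarrow> 'a::zero) set \<Rightarrow> nat" where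
  "support_weight R D = card {x \<in> R. \<exists>c\<in>D. c x \<noteq> 0}"

definition ghw :: "'b set \<Rightarrow> ('b \<Rightarrow> 'a::field) set \<Rightarrow> nat \<Rightarrow> nat" where
  "ghw R C s = Min {support_weight R D | D. D \<subseteq> C \<and> module.subspace fscale D
                      \<and> vector_space.dim fscale D = s}"

end

theory Submission
  imports Defs
begin


lemma vs_smat: "vector_space (smat :: 'a::field \<Rightarrow> 'a^'m^'l \<Rightarrow> _)"
  unfolding vector_space_def module_def smat_def
  by (auto simp: vec_eq_iff algebra_simps)

lemma vs_fscale: "vector_space (fscale :: 'a::field \<Rightarrow> ('b \<Rightarrow> 'a) \<Rightarrow> _)"
  unfolding vector_space_def module_def fscale_def
  by (auto simp: fun_eq_iff algebra_simps)

lemma card_subspace: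
  fixes scale :: "'a::{finite,field} \<Rightarrow> 'b::ab_group_add \<Rightarrow> 'b"
  assumes vs: "vector_space scale" and sub: "module.subspace scale X" and fin: "finite X"
  shows "card X = CARD('a) ^ vector_space.dim scale X"
proof -
  interpret v: vector_space scale by (rule vs)
  obtain B where B: "B \<subseteq> X" "v.independent B" "X \<subseteq> v.span B" "card B = v.dim X"
    using v.basis_exists by blast
  have fB: "finite B" using B(1) fin finite_subset by blast
  have spB: "v.span B = X" using B sub v.span_subspace by blast
  define f where "f u = (\<Sum>v\<in>B. scale (u v) v)" for u
  have im: "f ` (PiE B (\<lambda>_. UNIV)) = X"
  proof
    show "f ` (PiE B (\<lambda>_. UNIV)) \<subseteq> X"
      using v.span_finite[OF fB] spB f_def by auto
    show "X \<subseteq> f ` (PiE B (\<lambda>_. UNIV))"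
    proof
      fix x assume "x \<in> X"
      then obtain u where "x = f u" using v.span_finite[OF fB] spB f_def by auto
      moreover have "f u = f (restrict u B)" unfolding f_def by (rule sum.cong) auto
      ultimately show "x \<in> f ` (PiE B (\<lambda>_. UNIV))" by auto
    qed
  qed
  have inj: "inj_on f (PiE B (\<lambda>_. UNIV))"
  proof (rule inj_onI)
    fix u w assume u: "u \<in> PiE B (\<lambda>_. UNIV)" and w: "w \<in> PiE B (\<lambda>_. UNIV)" and e: "f u = f w"
    have "(\<Sum>v\<in>B. scale (u v - w v) v) = 0"
      using e unfolding f_def by (simp add: v.scale_left_diff_distrib sum_subtractf)
    then have "\<forall>v\<in>B. u v - w v = 0"
      using v.independentD[OF B(2) fB subset_refl, of "\<lambda>v. u v - w v"] by blast
    then show "u = w" using u w by (auto intro: PiE_ext)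
  qed
  have "card X = card (PiE B (\<lambda>_. UNIV :: 'a set))"
    using card_image[OF inj] im by simp
  also have "\<dots> = CARD('a) ^ card B" by (simp add: card_PiE fB)
  finally show ?thesis using B(4) by simp
qed


definition E :: "'l \<Rightarrow> 'm \<Rightarrow> 'a::field^'m^'l" where
  "E i j = (\<chi> a b. if a = i \<and> b = j then 1 else 0)"

definition cw :: "('a::field^'m^'l) set \<Rightarrow> 'a^'m^'l \<Rightarrow> ('a^'m^'l \<Rightarrow> 'a)" where
  "cw R C = (\<lambda>M. if M \<in> R then lin_form C M else 0)"

lemma det_code_cw: "det_code R = range (cw R)"
  unfolding det_code_def cw_def by auto

lemma double_delta: fixes i :: "'i::finite" and j :: "'j::finite" shows "(\<Sum>a\<in>UNIV. \<Sum>b\<in>UNIV. if a = i \<and> b = j then f a b else (0::'a::comm_monoid_add)) = f i j"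
proof -
  have "\<And>a. (\<Sum>b\<in>UNIV. if a = i \<and> b = j then f a b else 0) = (if a = i then f a j else 0)"
    by (auto simp: sum.delta')
  then show ?thesis by (simp add: sum.delta' sum.delta)
qed

lemma lin_form_E_right [simp]: "lin_form C (E i j) = C$i$j"
proof -
  have "lin_form C (E i j) = (\<Sum>a\<in>UNIV. \<Sum>b\<in>UNIV. if a = i \<and> b = j then C$a$b else 0)"
    unfolding lin_form_def E_def by (intro sum.cong refl) auto
  then show ?thesis by (simp add: double_delta)
qed

lemma lin_form_E_left [simp]: "lin_form (E i j) M = M$i$j"
proof -
  have "lin_form (E i j) M = (\<Sum>a\<in>UNIV. \<Sum>b\<in>UNIV. if a = i \<and> b = j then M$a$b else 0)"
    unfolding lin_form_def E_def by (intro sum.cong refl) auto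
  then show ?thesis by (simp add: double_delta)
qed

lemma lin_form_smat_right [simp]: "lin_form C (smat c M) = c * lin_form C M"
  unfolding lin_form_def smat_def by (simp add: sum_distrib_left algebra_simps)

lemma lin_form_smat_left [simp]: "lin_form (smat c C) M = c * lin_form C M"
  unfolding lin_form_def smat_def by (simp add: sum_distrib_left algebra_simps)

lemma lin_form_add_right [simp]: "lin_form C (M + N) = lin_form C M + lin_form C N"
  unfolding lin_form_def by (simp add: sum.distrib algebra_simps)

lemma lin_form_add_left [simp]: "lin_form (C + D) M = lin_form C M + lin_form D M"
  unfolding lin_form_def by (simp add: sum.distrib algebra_simps)

lemma lin_form_zero_right [simp]: "lin_form C 0 = 0"
  unfolding lin_form_def by simp

lemma lin_form_zero_left [simp]: "lin_form 0 M = 0"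
  unfolding lin_form_def by simp

lemma smat_smat [simp]: "smat a (smat b M) = smat (a * b) M"
  unfolding smat_def by (simp add: vec_eq_iff mult.assoc)

lemma smat_one [simp]: "smat 1 M = M"
  unfolding smat_def by (simp add: vec_eq_iff)

lemma smat_zero_right [simp]: "smat c 0 = 0"
  unfolding smat_def by (simp add: vec_eq_iff)

lemma smat_eq_0_iff: "smat c M = 0 \<longleftrightarrow> c = 0 \<or> M = 0"
  unfolding smat_def by (auto simp: vec_eq_iff)

lemma mem_proj_self: "M \<in> proj_pt M"
  unfolding proj_pt_def by (auto intro!: exI[of _ 1])

lemma proj_pt_sym: "N \<in> proj_pt M \<Longrightarrow> M \<in> proj_pt N"
proof -
  assume "N \<in> proj_pt M"
  then obtain c where c: "c \<noteq> 0" "N = smat c M" unfolding proj_pt_def by auto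
  then have "M = smat (inverse c) N" by simp
  moreover have "inverse c \<noteq> 0" using c by simp
  ultimately show ?thesis unfolding proj_pt_def by blast
qed

lemma proj_pt_sub: "N \<in> proj_pt M \<Longrightarrow> proj_pt N \<subseteq> proj_pt M"
proof
  fix X assume "N \<in> proj_pt M" "X \<in> proj_pt N"
  then obtain c d where "c \<noteq> 0" "N = smat c M" "d \<noteq> 0" "X = smat d N" unfolding proj_pt_def by auto
  then have "X = smat (d * c) M" "d * c \<noteq> 0" by auto
  then show "X \<in> proj_pt M" unfolding proj_pt_def by blast
qed

lemma proj_pt_eq: "N \<in> proj_pt M \<Longrightarrow> proj_pt N = proj_pt M"
  using proj_pt_sub proj_pt_sym by blast

lemma proj_pt_disj: "X \<in> proj_pt M \<Longrightarrow> X \<in> proj_pt N \<Longrightarrow> proj_pt M = proj_pt N"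
  using proj_pt_eq by metis

lemma card_proj_pt:
  assumes "(M :: 'a::{finite,field}^'m^'l) \<noteq> 0"
  shows "card (proj_pt M) = CARD('a) - 1"
proof -
  have "proj_pt M = (\<lambda>c. smat c M) ` (UNIV - {0})"
    unfolding proj_pt_def by auto
  moreover have "inj_on (\<lambda>c. smat c M) (UNIV - {0})"
  proof (rule inj_onI)
    fix a b assume "smat a M = smat b M"
    then have "smat (a - b) M = 0" unfolding smat_def by (auto simp: vec_eq_iff algebra_simps)
    then show "a = b" using assms by (simp add: smat_eq_0_iff)
  qed
  ultimately show ?thesis by (simp add: card_image card_Diff_singleton)
qed

lemma zero_notin_proj: "M \<noteq> 0 \<Longrightarrow> 0 \<notin> proj_pt M"
  unfolding proj_pt_def by (auto simp: smat_eq_0_iff)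

lemma rank_le_rows:
  fixes M :: "'a::field^'m^'l"
  assumes "\<And>i j. i \<notin> T \<Longrightarrow> M$i$j = 0"
  shows "rank M \<le> card T"
proof -
  have "rows M \<subseteq> vec.span ((\<lambda>i. row i M) ` T)"
  proof
    fix x assume "x \<in> rows M"
    then obtain i where x: "x = row i M" unfolding rows_def by auto
    show "x \<in> vec.span ((\<lambda>i. row i M) ` T)"
    proof (cases "i \<in> T")
      case True then show ?thesis using x by (auto intro: vec.span_base)
    next
      case False
      then have "x = 0" using x assms by (simp add: row_def vec_eq_iff)
      then show ?thesis by (simp add: vec.span_zero)
    qed
  qed
  then have "rank M \<le> card ((\<lambda>i. row i M) ` T)"
    unfolding row_rank_def_gen by (intro vec.dim_le_card) auto
  also have "\<dots> \<le> card T" by (rule card_image_le) auto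
  finally show ?thesis .
qed

lemma E_nz: "(E i j :: 'a::field^'m^'l) \<noteq> 0"
  unfolding E_def by (auto simp: vec_eq_iff)

lemma rank_E: "rank (E i j :: 'a::field^'m^'l) \<le> 1"
  using rank_le_rows[of "{i}" "E i j"] by (auto simp: E_def)


lemma rep_nz: "rep_system t R \<Longrightarrow> M \<in> R \<Longrightarrow> M \<noteq> 0"
proof
  assume "rep_system t R" "M \<in> R" "M = 0"
  then have "proj_pt M \<in> Dhat t" unfolding rep_system_def bij_betw_def by auto
  then obtain N where N: "proj_pt M = proj_pt N" "N \<noteq> 0" unfolding Dhat_def by auto
  then have "N \<in> proj_pt M" using mem_proj_self by metis
  then show False using \<open>M = 0\<close> N(2) unfolding proj_pt_def by auto
qed

lemma exists_rep:
  assumes "rep_system t R" "N \<noteq> 0" "rank N \<le> t"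
  shows "\<exists>M\<in>R. N \<in> proj_pt M \<and> M \<in> proj_pt N"
proof -
  have "proj_pt N \<in> Dhat t" unfolding Dhat_def using assms by auto
  then have "proj_pt N \<in> proj_pt ` R"
    using assms(1) unfolding rep_system_def bij_betw_def by auto
  then obtain M where "M \<in> R" "proj_pt M = proj_pt N" by auto
  then show ?thesis using mem_proj_self by metis
qed

lemma cw_inj:
  assumes "rep_system t R" "1 \<le> t"
  shows "inj (cw R :: 'a::field^'m^'l \<Rightarrow> _)"
proof (rule injI)
  fix C D :: "'a^'m^'l" assume e: "cw R C = cw R D"
  show "C = D"
  proof (subst vec_eq_iff, intro allI, subst vec_eq_iff, intro allI)
    fix i j
    have "rank (E i j :: 'a^'m^'l) \<le> t" using rank_E[of i j] assms(2) le_trans by blast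
    then obtain M where M: "M \<in> R" "E i j \<in> proj_pt M" "M \<in> proj_pt (E i j)"
      using exists_rep[OF assms(1) E_nz, of i j] by blast
    then obtain c where c: "c \<noteq> 0" "M = smat c (E i j)" unfolding proj_pt_def by auto
    have "lin_form C M = lin_form D M" using e M(1) unfolding cw_def by meson
    then show "C$i$j = D$i$j" using c by simp
  qed
qed

lemma count_pts:
  fixes R :: "('a::{finite,field}^'m^'l) set"
  assumes rep: "rep_system t R" and ZR: "Z \<subseteq> R" and ZW: "Z \<subseteq> W"
    and cl: "\<And>M c. M \<in> W \<Longrightarrow> c \<noteq> 0 \<Longrightarrow> smat c M \<in> W"
  shows "card Z * (CARD('a) - 1) \<le> card (W - {0})"
    and "(\<And>N. N \<in> W - {0} \<Longrightarrow> \<exists>M\<in>Z. N \<in> proj_pt M) \<Longrightarrow>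
           card Z * (CARD('a) - 1) = card (W - {0})"
proof -
  have nz: "\<And>M. M \<in> Z \<Longrightarrow> M \<noteq> 0" using rep_nz[OF rep] ZR by blast
  have inj: "inj_on proj_pt R" using rep unfolding rep_system_def bij_betw_def by auto
  have sub: "\<Union> (proj_pt ` Z) \<subseteq> W - {0}"
  proof
    fix X assume "X \<in> \<Union> (proj_pt ` Z)"
    then obtain M c where "M \<in> Z" "c \<noteq> 0" "X = smat c M" unfolding proj_pt_def by auto
    then show "X \<in> W - {0}" using cl ZW nz by (auto simp: smat_eq_0_iff)
  qed
  have "card (\<Union> (proj_pt ` Z)) = (\<Sum>M\<in>Z. card (proj_pt M))"
  proof (rule card_UN_disjoint)
    show "finite Z" by simp
    show "\<forall>i\<in>Z. finite (proj_pt i)" by simp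
    show "\<forall>i\<in>Z. \<forall>j\<in>Z. i \<noteq> j \<longrightarrow> proj_pt i \<inter> proj_pt j = {}"
    proof (intro ballI impI)
      fix M M' assume "M \<in> Z" "M' \<in> Z" "M \<noteq> M'"
      then have "proj_pt M \<noteq> proj_pt M'" using inj ZR unfolding inj_on_def by blast
      then show "proj_pt M \<inter> proj_pt M' = {}" using proj_pt_disj by blast
    qed
  qed
  also have "\<dots> = (\<Sum>M\<in>Z. CARD('a) - 1)" by (rule sum.cong) (auto simp: card_proj_pt nz)
  also have "\<dots> = card Z * (CARD('a) - 1)" by simp
  finally have eq: "card (\<Union> (proj_pt ` Z)) = card Z * (CARD('a) - 1)" .
  then show "card Z * (CARD('a) - 1) \<le> card (W - {0})"
    using sub by (metis card_mono finite)
  assume "\<And>N. N \<in> W - {0} \<Longrightarrow> \<exists>M\<in>Z. N \<in> proj_pt M"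
  then have "\<Union> (proj_pt ` Z) = W - {0}" using sub by blast
  then show "card Z * (CARD('a) - 1) = card (W - {0})" using eq by simp
qed

lemma card_supp:
  fixes P :: "('l::finite \<times> 'm::finite) set"
  shows "card {M :: 'a::{finite,zero}^'m^'l. \<forall>i j. (i,j) \<notin> P \<longrightarrow> M$i$j = 0} = CARD('a) ^ card P"
proof -
  define \<phi> where "\<phi> g = (\<chi> i j. if (i,j) \<in> P then g (i,j) else (0::'a))" for g
  have inj: "inj_on \<phi> (PiE P (\<lambda>_. UNIV))"
  proof (rule inj_onI)
    fix g h assume g: "g \<in> PiE P (\<lambda>_. UNIV)" and h: "h \<in> PiE P (\<lambda>_. UNIV)" and e: "\<phi> g = \<phi> h"
    have "\<forall>p\<in>P. g p = h p"
    proof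
      fix p assume "p \<in> P"
      moreover obtain i j where "p = (i,j)" by force
      moreover have "\<phi> g $ i $ j = \<phi> h $ i $ j" using e by simp
      ultimately show "g p = h p" unfolding \<phi>_def by simp
    qed
    then show "g = h" using g h by (auto intro: PiE_ext)
  qed
  have im: "\<phi> ` (PiE P (\<lambda>_. UNIV)) = {M. \<forall>i j. (i,j) \<notin> P \<longrightarrow> M$i$j = 0}"
  proof
    show "\<phi> ` (PiE P (\<lambda>_. UNIV)) \<subseteq> {M. \<forall>i j. (i,j) \<notin> P \<longrightarrow> M$i$j = 0}"
      unfolding \<phi>_def by auto
    show "{M. \<forall>i j. (i,j) \<notin> P \<longrightarrow> M$i$j = 0} \<subseteq> \<phi> ` (PiE P (\<lambda>_. UNIV))"
    proof
      fix M :: "'a^'m^'l" assume M: "M \<in> {M. \<forall>i j. (i,j) \<notin> P \<longrightarrow> M$i$j = 0}"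
      have "M = \<phi> (restrict (\<lambda>(i,j). M$i$j) P)"
      proof (subst vec_eq_iff, intro allI, subst vec_eq_iff, intro allI)
        fix i j
        show "M$i$j = \<phi> (restrict (\<lambda>(i,j). M$i$j) P) $ i $ j"
          using M unfolding \<phi>_def by (cases "(i,j) \<in> P") auto
      qed
      moreover have "restrict (\<lambda>(i,j). M$i$j) P \<in> PiE P (\<lambda>_. UNIV)" by simp
      ultimately show "M \<in> \<phi> ` (PiE P (\<lambda>_. UNIV))" by (rule image_eqI)
    qed
  qed
  have "card {M :: 'a^'m^'l. \<forall>i j. (i,j) \<notin> P \<longrightarrow> M$i$j = 0} = card (PiE P (\<lambda>_. UNIV :: 'a set))"
    using card_image[OF inj] im by simp
  also have "\<dots> = CARD('a) ^ card P" by (simp add: card_PiE)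
  finally show ?thesis .
qed





lemma matrix_decomp:
  fixes M :: "'a::field^'m^'l"
  shows "M = (\<Sum>i\<in>UNIV. \<Sum>j\<in>UNIV. smat (M$i$j) (E i j))"
proof (subst vec_eq_iff, intro allI, subst vec_eq_iff, intro allI)
  fix a b
  have "(\<Sum>i\<in>UNIV. \<Sum>j\<in>UNIV. smat (M$i$j) (E i j)) $ a $ b
        = (\<Sum>i\<in>UNIV. \<Sum>j\<in>UNIV. if i = a \<and> j = b then M$i$j else 0)"
    by (simp add: smat_def E_def if_distrib cong: if_cong) (intro sum.cong refl, auto)
  also have "\<dots> = M$a$b" by (rule double_delta)
  finally show "M$a$b = (\<Sum>i\<in>UNIV. \<Sum>j\<in>UNIV. smat (M$i$j) (E i j)) $ a $ b" by simp
qed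

lemma exists_C:
  fixes B :: "('a::field^'m^'l) set"
  assumes "\<not> module.dependent smat B"
  shows "\<exists>C. \<forall>b\<in>B. lin_form C b = g b"
proof -
  interpret p: vector_space_pair smat "(*) :: 'a \<Rightarrow> 'a \<Rightarrow> 'a"
    using vs_smat vector_space_over_itself.vector_space_axioms by (simp add: vector_space_pair_def)
  obtain h where h: "Vector_Spaces.linear smat (*) h" "\<forall>b\<in>B. h b = g b"
    using p.linear_independent_extend[OF assms] by blast
  define C :: "'a^'m^'l" where "C = (\<chi> i j. h (E i j))"
  have L: "\<And>M. lin_form C M = h M"
  proof -
    fix M :: "'a^'m^'l"
    have "h M = h (\<Sum>i\<in>UNIV. \<Sum>j\<in>UNIV. smat (M$i$j) (E i j))"
      by (rule arg_cong[where f=h, OF matrix_decomp])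
    also have "\<dots> = (\<Sum>i\<in>UNIV. \<Sum>j\<in>UNIV. M$i$j * h (E i j))"
      by (simp add: p.linear_sum[OF h(1)] p.linear_scale[OF h(1)])
    also have "\<dots> = lin_form C M" unfolding lin_form_def C_def by (simp add: mult.commute)
    finally show "lin_form C M = h M" by simp
  qed
  show ?thesis
  proof (intro exI[of _ C] ballI)
    fix b assume "b \<in> B"
    then show "lin_form C b = g b" using L h(2) by simp
  qed
qed

lemma geom: "(1::nat) \<le> q \<Longrightarrow> (\<Sum>i<k. q^i) * (q - 1) + 1 = q^k"
proof (induction k)
  case 0 then show ?case by simp
next
  case (Suc k)
  have "(\<Sum>i<Suc k. q^i) * (q - 1) + 1 = ((\<Sum>i<k. q^i) * (q - 1) + 1) + q^k * (q - 1)"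
    by (simp add: algebra_simps)
  also have "\<dots> = q^k + q^k * (q - 1)" using Suc by simp
  also have "\<dots> = q^k * q" using Suc.prems by (simp add: algebra_simps)
  finally show ?case by (simp add: mult.commute)
qed

lemma q_ge2: "2 \<le> CARD('a::{finite,field})"
proof -
  have "card {0::'a, 1} \<le> CARD('a)" by (rule card_mono) auto
  then show ?thesis by simp
qed




lemma lower_bound:
  fixes R :: "('a::{finite,field}^'m^'l) set" and D :: "('a^'m^'l \<Rightarrow> 'a) set"
  assumes rep: "rep_system t R" and t1: "1 \<le> t"
    and DC: "D \<subseteq> det_code R" and sub: "module.subspace fscale D"
    and dimD: "vector_space.dim fscale D = s" and sN: "s \<le> CARD('l) * CARD('m)"
  shows "card {M\<in>R. \<forall>c\<in>D. c M = 0} * (CARD('a) - 1) \<le> CARD('a) ^ (CARD('l) * CARD('m) - s) - 1"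
proof -
  let ?q = "CARD('a)"
  let ?N = "CARD('l) * CARD('m)"
  have q2: "2 \<le> ?q" by (rule q_ge2)
  interpret fs: vector_space "fscale :: 'a \<Rightarrow> ('a^'m^'l \<Rightarrow> 'a) \<Rightarrow> _" by (rule vs_fscale)
  interpret ms: vector_space "smat :: 'a \<Rightarrow> 'a^'m^'l \<Rightarrow> _" by (rule vs_smat)
  have inj: "inj (cw R)" by (rule cw_inj[OF rep t1])
  define Q where "Q = {C. cw R C \<in> D}"
  have DQ: "D = cw R ` Q" using DC unfolding Q_def det_code_cw by auto
  have finD: "finite D" using DQ by simp
  have cardD: "card D = ?q ^ s"
    using card_subspace[OF vs_fscale sub finD] dimD by simp
  have cardQ: "card Q = ?q ^ s"
    using cardD DQ card_image[of "cw R" Q] inj by (simp add: inj_on_subset)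
  define W where "W = {M :: 'a^'m^'l. \<forall>C\<in>Q. lin_form C M = 0}"
  have subW: "ms.subspace W"
    unfolding ms.subspace_def W_def by simp
  have cardW: "card W = ?q ^ ms.dim W"
    using card_subspace[OF vs_smat subW] by simp
  obtain BW where BW: "BW \<subseteq> W" "ms.independent BW" "W \<subseteq> ms.span BW" "card BW = ms.dim W"
    using ms.basis_exists by blast
  have finBW: "finite BW" by simp
  define Cg where "Cg g = (SOME C. \<forall>b\<in>BW. lin_form C b = g b)" for g
  have Cg: "\<And>g b. b \<in> BW \<Longrightarrow> lin_form (Cg g) b = g b"
  proof -
    fix g b assume "b \<in> BW"
    have "\<exists>C. \<forall>b\<in>BW. lin_form C b = g b" by (rule exists_C[OF BW(2)])
    then have "\<forall>b\<in>BW. lin_form (Cg g) b = g b" unfolding Cg_def by (rule someI_ex)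
    then show "lin_form (Cg g) b = g b" using \<open>b \<in> BW\<close> by blast
  qed
  have kill: "\<And>k b. k \<in> Q \<Longrightarrow> b \<in> BW \<Longrightarrow> lin_form k b = 0"
    using BW(1) unfolding W_def by blast
  define H where "H p = Cg (fst p) + snd p" for p
  have injH: "inj_on H (PiE BW (\<lambda>_. UNIV) \<times> Q)"
  proof (rule inj_onI)
    fix p p' assume p: "p \<in> PiE BW (\<lambda>_. UNIV) \<times> Q" and p': "p' \<in> PiE BW (\<lambda>_. UNIV) \<times> Q"
      and e: "H p = H p'"
    have "\<forall>b\<in>BW. fst p b = fst p' b"
    proof
      fix b assume b: "b \<in> BW"
      have "lin_form (H p) b = fst p b" unfolding H_def using Cg[OF b] kill[OF _ b] p by auto
      moreover have "lin_form (H p') b = fst p' b" unfolding H_def using Cg[OF b] kill[OF _ b] p' by auto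
      ultimately show "fst p b = fst p' b" using e by simp
    qed
    moreover have "fst p \<in> PiE BW (\<lambda>_. UNIV)" "fst p' \<in> PiE BW (\<lambda>_. UNIV)"
      using p p' by (auto simp only: mem_Times_iff)
    ultimately have "fst p = fst p'" using PiE_ext by metis
    then have "snd p = snd p'" using e unfolding H_def by simp
    then show "p = p'" using \<open>fst p = fst p'\<close> by (simp add: prod_eq_iff)
  qed
  have "card (PiE BW (\<lambda>_. UNIV :: 'a set) \<times> Q) \<le> card (UNIV :: ('a^'m^'l) set)"
    by (rule card_inj_on_le[OF injH]) auto
  then have "?q ^ ms.dim W * ?q ^ s \<le> ?q ^ ?N"
    using BW(4) cardQ by (simp add: card_PiE card_cartesian_product power_mult[symmetric] mult.commute)
  then have "?q ^ (ms.dim W + s) \<le> ?q ^ ?N" by (simp only: power_add)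
  moreover have q1: "1 < ?q" using q2 by linarith
  ultimately have "ms.dim W + s \<le> ?N" using power_le_imp_le_exp by blast
  then have "ms.dim W \<le> ?N - s" by linarith
  then have "?q ^ ms.dim W \<le> ?q ^ (?N - s)" using q1 by (intro power_increasing) auto
  then have "card W \<le> ?q ^ (?N - s)" using cardW by simp
  moreover have "0 \<in> W" unfolding W_def by simp
  ultimately have cW0: "card (W - {0}) \<le> ?q ^ (?N - s) - 1" by simp
  have ZW: "{M\<in>R. \<forall>c\<in>D. c M = 0} \<subseteq> W"
  proof
    fix M assume M: "M \<in> {M\<in>R. \<forall>c\<in>D. c M = 0}"
    show "M \<in> W" unfolding W_def
    proof (intro CollectI ballI)
      fix C assume "C \<in> Q"
      then have "cw R C M = 0" using M unfolding Q_def by blast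
      then show "lin_form C M = 0" using M unfolding cw_def by simp
    qed
  qed
  have "card {M\<in>R. \<forall>c\<in>D. c M = 0} * (?q - 1) \<le> card (W - {0})"
  proof (rule count_pts(1)[OF rep _ ZW])
    show "{M\<in>R. \<forall>c\<in>D. c M = 0} \<subseteq> R" by blast
    show "\<And>M c. M \<in> W \<Longrightarrow> c \<noteq> 0 \<Longrightarrow> smat c M \<in> W" unfolding W_def by simp
  qed
  then show ?thesis using cW0 by linarith
qed




lemma attain:
  fixes R :: "('a::{finite,field}^'m^'l) set"
  assumes rep: "rep_system t R" and t1: "1 \<le> t" and tl: "t \<le> CARD('l)"
    and s1: "(CARD('l) - t) * CARD('m) \<le> s" and sN: "s \<le> CARD('l) * CARD('m)"
  shows "\<exists>D. D \<subseteq> det_code R \<and> module.subspace fscale D \<and> vector_space.dim fscale D = s \<and>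
     card {M\<in>R. \<forall>c\<in>D. c M = 0} * (CARD('a) - 1) = CARD('a) ^ (CARD('l) * CARD('m) - s) - 1"
proof -
  let ?q = "CARD('a)"
  let ?N = "CARD('l) * CARD('m)"
  let ?k = "?N - s"
  have q2: "2 \<le> ?q" by (rule q_ge2)
  have q1: "1 < ?q" using q2 by linarith
  interpret fs: vector_space "fscale :: 'a \<Rightarrow> ('a^'m^'l \<Rightarrow> 'a) \<Rightarrow> _" by (rule vs_fscale)
  have inj: "inj (cw R)" by (rule cw_inj[OF rep t1])
  obtain T :: "'l set" where T: "card T = t"
    using ex_card[of t "UNIV :: 'l set"] tl by auto
  have "?k \<le> t * CARD('m)"
  proof -
    have "?N - s \<le> ?N - (CARD('l) - t) * CARD('m)" using s1 by linarith
    also have "\<dots> = t * CARD('m)" using tl by (simp add: diff_mult_distrib)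
    finally show ?thesis .
  qed
  also have "\<dots> = card (T \<times> (UNIV :: 'm set))" using T by (simp add: card_cartesian_product)
  finally obtain S where S: "S \<subseteq> T \<times> (UNIV :: 'm set)" "card S = ?k"
    using ex_card by metis
  define Q0 where "Q0 = {C :: 'a^'m^'l. \<forall>i j. (i,j) \<notin> - S \<longrightarrow> C$i$j = 0}"
  have "card (- S) = ?N - ?k"
    using S(2) by (simp add: Compl_eq_Diff_UNIV card_Diff_subset)
  moreover have "?N - ?k = s" using sN by simp
  moreover have "card Q0 = ?q ^ card (- S)" unfolding Q0_def by (rule card_supp)
  ultimately have cardQ0: "card Q0 = ?q ^ s" by simp
  define D0 where "D0 = cw R ` Q0"
  have D0C: "D0 \<subseteq> det_code R" unfolding D0_def det_code_cw by auto
  have cw_add: "\<And>C C'. cw R C + cw R C' = cw R (C + C')"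
    unfolding cw_def by (auto simp: fun_eq_iff)
  have cw_scale: "\<And>c C. fscale c (cw R C) = cw R (smat c C)"
    unfolding cw_def fscale_def by (auto simp: fun_eq_iff)
  have cw_0: "cw R 0 = 0" unfolding cw_def by (auto simp: fun_eq_iff)
  have subD0: "fs.subspace D0"
    unfolding fs.subspace_def
  proof (intro conjI ballI allI)
    have "0 \<in> Q0" unfolding Q0_def by simp
    then show "0 \<in> D0" unfolding D0_def by (rule image_eqI[where f="cw R" and x=0, OF cw_0[symmetric]])
    fix x y assume "x \<in> D0" "y \<in> D0"
    then obtain C C' where "C \<in> Q0" "C' \<in> Q0" "x = cw R C" "y = cw R C'" unfolding D0_def by auto
    moreover have "C + C' \<in> Q0" using \<open>C \<in> Q0\<close> \<open>C' \<in> Q0\<close> unfolding Q0_def by simp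
    ultimately show "x + y \<in> D0" unfolding D0_def using cw_add by auto
  next
    fix c x assume "x \<in> D0"
    then obtain C where "C \<in> Q0" "x = cw R C" unfolding D0_def by auto
    moreover have "smat c C \<in> Q0" using \<open>C \<in> Q0\<close> unfolding Q0_def smat_def by simp
    ultimately show "fscale c x \<in> D0" unfolding D0_def using cw_scale by auto
  qed
  have cardD0: "card D0 = ?q ^ s" unfolding D0_def
    using card_image[of "cw R" Q0] inj cardQ0 by (simp add: inj_on_subset)
  have "card D0 = ?q ^ fs.dim D0" using card_subspace[OF vs_fscale subD0] by simp
  then have dimD0: "fs.dim D0 = s" using cardD0 power_inject_exp[OF q1] by metis
  define WS where "WS = {M :: 'a^'m^'l. \<forall>i j. (i,j) \<notin> S \<longrightarrow> M$i$j = 0}"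
  have "card WS = ?q ^ card S" unfolding WS_def by (rule card_supp)
  then have cardWS: "card WS = ?q ^ ?k" using S(2) by simp
  have Z0: "{M\<in>R. \<forall>c\<in>D0. c M = 0} = R \<inter> WS"
  proof (intro equalityI subsetI)
    fix M assume M: "M \<in> {M\<in>R. \<forall>c\<in>D0. c M = 0}"
    have "\<And>i j. (i,j) \<notin> S \<Longrightarrow> M$i$j = 0"
    proof -
      fix i j assume ij: "(i,j) \<notin> S"
      have "E i j \<in> Q0" unfolding Q0_def E_def using ij by auto
      then have "cw R (E i j) M = 0" using M unfolding D0_def by auto
      then show "M$i$j = 0" using M unfolding cw_def by simp
    qed
    then show "M \<in> R \<inter> WS" using M unfolding WS_def by auto
  next
    fix M assume M: "M \<in> R \<inter> WS"
    have "\<And>C. C \<in> Q0 \<Longrightarrow> lin_form C M = 0"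
    proof -
      fix C assume C: "C \<in> Q0"
      have zz: "\<And>i j. C$i$j * M$i$j = 0"
      proof -
        fix i j show "C$i$j * M$i$j = 0"
          using C M unfolding Q0_def WS_def by (cases "(i,j) \<in> S") auto
      qed
      show "lin_form C M = 0" unfolding lin_form_def using zz by (intro sum.neutral ballI) blast
    qed
    then show "M \<in> {M\<in>R. \<forall>c\<in>D0. c M = 0}" using M unfolding D0_def cw_def by auto
  qed
  have "card (R \<inter> WS) * (?q - 1) = card (WS - {0})"
  proof (rule count_pts(2)[OF rep])
    show "R \<inter> WS \<subseteq> R" "R \<inter> WS \<subseteq> WS" by auto
    show "\<And>M c. M \<in> WS \<Longrightarrow> c \<noteq> 0 \<Longrightarrow> smat c M \<in> WS" unfolding WS_def smat_def by simp
    fix N assume N: "N \<in> WS - {0}"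
    have "rank N \<le> card T"
    proof (rule rank_le_rows)
      fix i j assume "i \<notin> T"
      then have "(i,j) \<notin> S" using S(1) by auto
      then show "N$i$j = 0" using N unfolding WS_def by auto
    qed
    then obtain M where M: "M \<in> R" "N \<in> proj_pt M" "M \<in> proj_pt N"
      using exists_rep[OF rep, of N] N T by auto
    then obtain c where "c \<noteq> 0" "M = smat c N" unfolding proj_pt_def by auto
    then have "M \<in> WS" using N unfolding WS_def smat_def by auto
    then show "\<exists>M\<in>R \<inter> WS. N \<in> proj_pt M" using M by auto
  qed
  moreover have "0 \<in> WS" unfolding WS_def by simp
  then have "card (WS - {0}) = ?q ^ ?k - 1"
    using cardWS by (simp add: card_Diff_singleton)
  ultimately have "card {M\<in>R. \<forall>c\<in>D0. c M = 0} * (?q - 1) = ?q ^ ?k - 1" using Z0 by simp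
  then show ?thesis using D0C subD0 dimD0 by blast
qed




theorem mainTheorem10:
  fixes t s :: nat and R :: "('a::{finite,field}^'m^'l) set"
  assumes "1 \<le> t" and "t \<le> CARD('l)" and "CARD('l) \<le> CARD('m)"
    and "(CARD('l) - t) * CARD('m) \<le> s" and "s \<le> CARD('l) * CARD('m)" and "1 \<le> s"
    and "rep_system t R"
  shows "int (ghw R (det_code R) s) =
           int (card (Dhat t :: ('a^'m^'l) set set))
           - (\<Sum>i<CARD('l) * CARD('m) - s. int CARD('a) ^ i)"
proof -
  let ?q = "CARD('a)"
  let ?k = "CARD('l) * CARD('m) - s"
  define G where "G = (\<Sum>i<?k. ?q ^ i)"
  have q2: "2 \<le> ?q" by (rule q_ge2)
  have Gq: "G * (?q - 1) + 1 = ?q ^ ?k" unfolding G_def using q2 by (intro geom) auto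
  have qpos: "0 < ?q - 1" using q2 by linarith
  define Zf where "Zf D = {M\<in>R. \<forall>c\<in>D. c M = 0}" for D :: "('a^'m^'l \<Rightarrow> 'a) set"
  have swD: "\<And>D. support_weight R D = card R - card (Zf D)"
  proof -
    fix D :: "('a^'m^'l \<Rightarrow> 'a) set"
    have "{x \<in> R. \<exists>c\<in>D. c x \<noteq> 0} = R - Zf D" unfolding Zf_def by auto
    moreover have "Zf D \<subseteq> R" unfolding Zf_def by auto
    ultimately show "support_weight R D = card R - card (Zf D)"
      unfolding support_weight_def by (simp add: card_Diff_subset)
  qed
  have low: "\<And>D. D \<subseteq> det_code R \<Longrightarrow> module.subspace fscale D \<Longrightarrow> vector_space.dim fscale D = s
      \<Longrightarrow> card (Zf D) \<le> G"
  proof -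
    fix D :: "('a^'m^'l \<Rightarrow> 'a) set"
    assume "D \<subseteq> det_code R" "module.subspace fscale D" "vector_space.dim fscale D = s"
    then have "card (Zf D) * (?q - 1) \<le> ?q ^ ?k - 1"
      unfolding Zf_def using lower_bound[OF assms(7) assms(1)] assms(5) by blast
    also have "\<dots> = G * (?q - 1)" using Gq by linarith
    finally show "card (Zf D) \<le> G" using qpos by simp
  qed
  obtain D0 where D0: "D0 \<subseteq> det_code R" "module.subspace fscale D0" "vector_space.dim fscale D0 = s"
    "card (Zf D0) * (?q - 1) = ?q ^ ?k - 1"
    using attain[OF assms(7) assms(1) assms(2) assms(4) assms(5)] unfolding Zf_def by blast
  have "card (Zf D0) * (?q - 1) = G * (?q - 1)" using D0(4) Gq by linarith
  then have Z0: "card (Zf D0) = G" using qpos by simp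
  have "Zf D0 \<subseteq> R" unfolding Zf_def by auto
  then have "card (Zf D0) \<le> card R" by (intro card_mono) auto
  then have GR: "G \<le> card R" using Z0 by simp
  define A where "A = {support_weight R D | D. D \<subseteq> det_code R \<and> module.subspace fscale D
                      \<and> vector_space.dim fscale D = s}"
  have finA: "finite A"
  proof (rule finite_subset)
    show "A \<subseteq> {..card R}"
    proof
      fix y assume "y \<in> A"
      then obtain D :: "('a^'m^'l \<Rightarrow> 'a) set" where "y = support_weight R D" unfolding A_def by blast
      then show "y \<in> {..card R}" using swD by simp
    qed
  qed simp
  have "Min A = card R - G"
  proof (rule Min_eqI[OF finA])
    show "\<And>y. y \<in> A \<Longrightarrow> card R - G \<le> y"
    proof -
      fix y assume "y \<in> A"
      then obtain D where D: "y = support_weight R D" "D \<subseteq> det_code R" "module.subspace fscale D"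
        "vector_space.dim fscale D = s" unfolding A_def by blast
      then have "card (Zf D) \<le> G" using low by blast
      then show "card R - G \<le> y" using D(1) swD by simp
    qed
    have sw0: "support_weight R D0 = card R - G" using swD Z0 by simp
    show "card R - G \<in> A" unfolding A_def
      by (rule CollectI, rule exI[of _ D0]) (simp add: sw0 D0(1-3))
  qed
  moreover have "ghw R (det_code R) s = Min A" unfolding ghw_def A_def by simp
  moreover have "card R = card (Dhat t :: ('a^'m^'l) set set)"
    using assms(7) unfolding rep_system_def by (rule bij_betw_same_card)
  ultimately have "ghw R (det_code R) s = card (Dhat t :: ('a^'m^'l) set set) - G" by simp
  then have "int (ghw R (det_code R) s) = int (card (Dhat t :: ('a^'m^'l) set set)) - int G"
    using GR \<open>card R = _\<close> by simp
  then show ?thesis unfolding G_def by (simp add: of_nat_sum)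
qed


end
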